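(* Let $T>0$, $n\ge 1$, $\Delta=T/n$, $t_i=i\Delta$ and $\mathbb{S}_i=(t_{i-1},t_i]$ for $i=1,\dots,n$. Let $W$ be a standard Wiener process and let $X$ be the process with $X(0)=X_0$ which on each interval $\mathbb{S}_i$ evolves as $dX(t)=\mu_i\,dt+\sigma_i\,dW(t)$ with constants $\mu_i\in\mathbb{R}$, $\sigma_i>0$. Write $X_i=X(t_i)$ and define the bridges $$Y(t,\mathbb{S}_i)=X(t)-X_{i-1}-\frac{t-t_{i-1}}{\Delta}(X_i-X_{i-1}),\qquad t\in\mathbb{S}_i.$$ Let $Y(t)=W(t)-tW(1)$, $t\in(0,1]$, be the canonical bridge. Consider an estimator $$\hat D_{\rm est}(T)=\sum_{i=1}^n \hat D_{\rm est}\{Y(t,\mathbb{S}_i):t\in\mathbb{S}_i\},$$ where each spot estimator $\hat D_{\rm est}\{Y(t,\mathbb{S}_i):t\in\mathbb{S}_i\}$ is a (fixed, measurable) functional of the bridge path on $\mathbb{S}_i$, and assume the estimator is homogeneous, i.e. for each $i$, $$\hat D_{\rm est}\{Y(t,\mathbb{S}_i):t\in\mathbb{S}_i\}\ \text{has the same law as}\ \sigma_i^2\Delta\cdot \hat d_{\rm est},\qquad \hat d_{\rm est}:=\hat D_{\rm est}\{Y(t):t\in(0,1]\},$$ and unbiased, i.e. $\mathrm{E}[\hat d_{\rm est}]=1$, with $\mathrm{Var}[\hat d_{\rm est}]<\infty$. Define the efficiency (coefficient of variation) $$\rho[\hat D_{\rm est}(T)]=\frac{\sqrt{\mathrm{Var}[\hat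 D_{\rm est}(T)]}}{\mathrm{E}[\hat D_{\rm est}(T)]}.$$ Then its lower bound over all volatilities, $$\rho_{\rm est}(n):=\inf_{\sigma_1>0,\dots,\sigma_n>0}\rho[\hat D_{\rm est}(T)],$$ equals $$\rho_{\rm est}(n)=\sqrt{\mathrm{Var}[\hat d_{\rm est}]/n}.$$
   Context: The setting models, on each time step, the log-price as a Wiener process with constant drift and volatility (the paper's standing approximation of an Itô log-price process $dX=\mu(t)dt+\sigma(t)dW$ on short steps). The bridge on each interval is the log-price minus its linear interpolation between the open value $X_{i-1}$ and close value $X_i$; bridges on distinct intervals are functionals of the Wiener increments on disjoint intervals. *)

theory Defs
  imports "HOL-Probability.Probability"
begin

definition wiener :: "'a measure \<Rightarrow> (real \<Rightarrow> 'a \<Rightarrow> real) \<Rightarrow> bool" where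
  "wiener M W \<longleftrightarrow>
     prob_space M \<and>
     (\<forall>\<omega>\<in>space M. W 0 \<omega> = 0 \<and> continuous_on {0..} (\<lambda>t. W t \<omega>)) \<and>
     (\<forall>s t. 0 \<le> s \<and> s < t \<longrightarrow>
        distributed M lborel (\<lambda>\<omega>. W t \<omega> - W s \<omega>) (normal_density 0 (sqrt (t - s)))) \<and>
     (\<forall>(ts :: nat \<Rightarrow> real) m. 0 \<le> ts 0 \<and> (\<forall>k<m. ts k \<le> ts (Suc k)) \<longrightarrow>
        prob_space.indep_vars M (\<lambda>_. borel) (\<lambda>k \<omega>. W (ts (Suc k)) \<omega> - W (ts k) \<omega>) {..<m})"

definition grid :: "real \<Rightarrow> nat \<Rightarrow> real" where
  "grid \<Delta> i = real i * \<Delta>"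

definition Sint :: "real \<Rightarrow> nat \<Rightarrow> real set" where
  "Sint \<Delta> i = {grid \<Delta> (i - 1) <.. grid \<Delta> i}"

text \<open>Log-price X with X(0) = X0 and dX = mu_j dt + sigma_j dW on S_j (j = 1..n),
  written as the (piecewise constant integrand) integral:
  X(t) = X0 + sum_j mu_j |[0,t] \<inter> S_j| + sigma_j (W(clip_j t) - W(t_{j-1})),
  where clip_j t = max t_{j-1} (min t t_j).\<close>
definition Xproc :: "nat \<Rightarrow> real \<Rightarrow> real \<Rightarrow> (nat \<Rightarrow> real) \<Rightarrow> (nat \<Rightarrow> real)
                    \<Rightarrow> (real \<Rightarrow> 'a \<Rightarrow> real) \<Rightarrow> real \<Rightarrow> 'a \<Rightarrow> real" where
  "Xproc n \<Delta> X0 \<mu> \<sigma> W t \<omega> =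
     X0 + (\<Sum>j\<in>{1..n}.
             \<mu> j * (max (grid \<Delta> (j - 1)) (min t (grid \<Delta> j)) - grid \<Delta> (j - 1))
           + \<sigma> j * (W (max (grid \<Delta> (j - 1)) (min t (grid \<Delta> j))) \<omega> - W (grid \<Delta> (j - 1)) \<omega>))"

definition bridge :: "nat \<Rightarrow> real \<Rightarrow> real \<Rightarrow> (nat \<Rightarrow> real) \<Rightarrow> (nat \<Rightarrow> real)
                    \<Rightarrow> (real \<Rightarrow> 'a \<Rightarrow> real) \<Rightarrow> nat \<Rightarrow> real \<Rightarrow> 'a \<Rightarrow> real" where
  "bridge n \<Delta> X0 \<mu> \<sigma> W i t \<omega> =
     Xproc n \<Delta> X0 \<mu> \<sigma> W t \<omega> - Xproc n \<Delta> X0 \<mu> \<sigma> W (grid \<Delta> (i - 1)) \<omega>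
     - (t - grid \<Delta> (i - 1)) / \<Delta> *
       (Xproc n \<Delta> X0 \<mu> \<sigma> W (grid \<Delta> i) \<omega> - Xproc n \<Delta> X0 \<mu> \<sigma> W (grid \<Delta> (i - 1)) \<omega>)"

definition bridge_path :: "nat \<Rightarrow> real \<Rightarrow> real \<Rightarrow> (nat \<Rightarrow> real) \<Rightarrow> (nat \<Rightarrow> real)
                    \<Rightarrow> (real \<Rightarrow> 'a \<Rightarrow> real) \<Rightarrow> nat \<Rightarrow> 'a \<Rightarrow> real \<Rightarrow> real" where
  "bridge_path n \<Delta> X0 \<mu> \<sigma> W i \<omega> =
     (\<lambda>t. if t \<in> Sint \<Delta> i then bridge n \<Delta> X0 \<mu> \<sigma> W i t \<omega> else 0)"

definition canon_bridge_path :: "(real \<Rightarrow> 'a \<Rightarrow> real) \<Rightarrow> 'a \<Rightarrow> real \<Rightarrow> real" where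
  "canon_bridge_path W \<omega> = (\<lambda>t. if t \<in> {0<..1} then W t \<omega> - t * W 1 \<omega> else 0)"

abbreviation path_space :: "(real \<Rightarrow> real) measure" where
  "path_space \<equiv> Pi\<^sub>M UNIV (\<lambda>_. borel)"

definition spot_est :: "(real \<Rightarrow> real \<Rightarrow> (real \<Rightarrow> real) \<Rightarrow> real) \<Rightarrow> nat \<Rightarrow> real \<Rightarrow> real
      \<Rightarrow> (nat \<Rightarrow> real) \<Rightarrow> (nat \<Rightarrow> real) \<Rightarrow> (real \<Rightarrow> 'a \<Rightarrow> real) \<Rightarrow> nat \<Rightarrow> 'a \<Rightarrow> real" where
  "spot_est Dest n \<Delta> X0 \<mu> \<sigma> W i \<omega> =
     Dest (grid \<Delta> (i - 1)) (grid \<Delta> i) (bridge_path n \<Delta> X0 \<mu> \<sigma> W i \<omega>)"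

definition total_est :: "(real \<Rightarrow> real \<Rightarrow> (real \<Rightarrow> real) \<Rightarrow> real) \<Rightarrow> nat \<Rightarrow> real \<Rightarrow> real
      \<Rightarrow> (nat \<Rightarrow> real) \<Rightarrow> (nat \<Rightarrow> real) \<Rightarrow> (real \<Rightarrow> 'a \<Rightarrow> real) \<Rightarrow> 'a \<Rightarrow> real" where
  "total_est Dest n \<Delta> X0 \<mu> \<sigma> W \<omega> = (\<Sum>i\<in>{1..n}. spot_est Dest n \<Delta> X0 \<mu> \<sigma> W i \<omega>)"

definition canon_est :: "(real \<Rightarrow> real \<Rightarrow> (real \<Rightarrow> real) \<Rightarrow> real) \<Rightarrow> (real \<Rightarrow> 'a \<Rightarrow> real) \<Rightarrow> 'a \<Rightarrow> real" where
  "canon_est Dest W \<omega> = Dest 0 1 (canon_bridge_path W \<omega>)"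

definition expect :: "'a measure \<Rightarrow> ('a \<Rightarrow> real) \<Rightarrow> real" where
  "expect M X = integral\<^sup>L M X"

definition var :: "'a measure \<Rightarrow> ('a \<Rightarrow> real) \<Rightarrow> real" where
  "var M X = integral\<^sup>L M (\<lambda>\<omega>. (X \<omega> - expect M X)\<^sup>2)"

definition coef_var :: "'a measure \<Rightarrow> ('a \<Rightarrow> real) \<Rightarrow> real" where
  "coef_var M X = sqrt (var M X) / expect M X"

end

theory Submission
  imports Defs
begin


lemma W_meas:
  assumes "wiener M W" "0 \<le> s"
  shows "W s \<in> borel_measurable M"
proof (cases "s = 0")
  case True
  have "(\<lambda>_. 0::real) \<in> borel_measurable M" by simp
  moreover have "\<And>\<omega>. \<omega> \<in> space M \<Longrightarrow> 0 = W s \<omega>" using assms True by (auto simp: wiener_def)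
  ultimately show ?thesis by (subst measurable_cong) auto
next
  case False
  then have "s > 0" using assms by simp
  then have "distributed M lborel (\<lambda>\<omega>. W s \<omega> - W 0 \<omega>) (normal_density 0 (sqrt (s - 0)))"
    using assms unfolding wiener_def by blast
  then have "(\<lambda>\<omega>. W s \<omega> - W 0 \<omega>) \<in> borel_measurable M"
  proof -
    have "(\<lambda>\<omega>. W s \<omega> - W 0 \<omega>) \<in> M \<rightarrow>\<^sub>M lborel" by (rule distributed_measurable) fact
    then show ?thesis by (simp only: measurable_cong_sets[OF refl sets_lborel])
  qed
  moreover have "\<And>\<omega>. \<omega> \<in> space M \<Longrightarrow> W s \<omega> - W 0 \<omega> = W s \<omega>" using assms by (auto simp: wiener_def)
  ultimately show ?thesis by (subst measurable_cong) auto
qed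

lemma grid_le:
  assumes "\<Delta> > 0" "j1 < j2" "1 \<le> j2"
  shows "grid \<Delta> j1 \<le> grid \<Delta> (j2 - 1)"
proof -
  have "real j1 \<le> real (j2 - 1)" using assms by simp
  then show ?thesis using assms by (simp add: grid_def)
qed

lemma block_indep:
  assumes wien: "wiener M W" and Dpos: "\<Delta> > 0"
    and K: "finite K" "K \<noteq> {}" "\<forall>j\<in>K. 1 \<le> j"
    and J: "\<forall>j\<in>K. finite (J j)"
    and c: "\<forall>j\<in>K. \<forall>t\<in>J j. grid \<Delta> (j-1) \<le> c j t \<and> c j t \<le> grid \<Delta> j"
    and E: "\<forall>j\<in>K. \<forall>t\<in>J j. E j t \<in> sets borel"
  shows "measure M (\<Inter>j\<in>K. {\<omega>\<in>space M. \<forall>t\<in>J j. W (c j t) \<omega> - W (grid \<Delta> (j-1)) \<omega> \<in> E j t})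
       = (\<Prod>j\<in>K. measure M {\<omega>\<in>space M. \<forall>t\<in>J j. W (c j t) \<omega> - W (grid \<Delta> (j-1)) \<omega> \<in> E j t})"
proof -
  interpret prob_space M using wien by (simp add: wiener_def)
  define a where "a j = grid \<Delta> (j-1)" for j
  define b where "b j = grid \<Delta> j" for j
  define P where "P = (\<Union>j\<in>K. {a j, b j} \<union> c j ` J j)"
  have finP: "finite P" using K J by (auto simp: P_def)
  have a0: "\<And>j. 0 \<le> a j" using Dpos by (simp add: a_def grid_def)
  have b0: "\<And>j. 0 \<le> b j" using Dpos by (simp add: b_def grid_def)
  have P0: "\<forall>x\<in>P. 0 \<le> x"
  proof
    fix x assume "x \<in> P"
    then obtain j where j: "j \<in> K" and x: "x = a j \<or> x = b j \<or> x \<in> c j ` J j"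
      unfolding P_def by blast
    show "0 \<le> x"
    proof (cases "x \<in> c j ` J j")
      case True
      then obtain t where t: "t \<in> J j" "x = c j t" by blast
      have "a j \<le> c j t" using c j t by (simp add: a_def)
      then show ?thesis using a0[of j] t by simp
    next
      case False
      then show ?thesis using x a0[of j] b0[of j] by auto
    qed
  qed
  define L where "L = sorted_list_of_set P"
  define ts where "ts k = L ! k" for k
  define m where "m = length L - 1"
  have setL: "set L = P" using finP by (simp add: L_def)
  have sL: "sorted_wrt (<) L" by (simp add: L_def)
  obtain j0 where "j0 \<in> K" using K by auto
  then have "P \<noteq> {}" by (auto simp: P_def)
  then have Lne: "L \<noteq> []" using setL by auto
  have lenL: "length L = Suc m" using Lne by (cases L) (auto simp: m_def)
  have mono_lt: "\<And>p q. p < q \<Longrightarrow> q < length L \<Longrightarrow> ts p < ts q"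
    using sL by (simp add: ts_def sorted_wrt_iff_nth_less)
  have mono_le: "ts p \<le> ts q" if "p \<le> q" "q < length L" for p q
    using mono_lt[of p q] that by (cases "p = q") auto
  have le_imp: "p \<le> q" if pq: "p < length L" "q < length L" "ts p \<le> ts q" for p q
  proof (rule ccontr)
    assume "\<not> p \<le> q"
    then have "q < p" by simp
    then have "ts q < ts p" using mono_lt pq(1) by blast
    then show False using pq(3) by simp
  qed
  have inP: "\<And>x. x\<in>P \<Longrightarrow> \<exists>p<length L. ts p = x"
    using setL by (auto simp: ts_def in_set_conv_nth)
  define D where "D k \<omega> = W (ts (Suc k)) \<omega> - W (ts k) \<omega>" for k \<omega>
  have "L ! 0 \<in> set L" using Lne by simp
  then have ts0: "0 \<le> ts 0" using P0 setL by (simp add: ts_def)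
  have tsmono: "\<forall>k<m. ts k \<le> ts (Suc k)" using mono_le lenL by simp
  have indD: "indep_vars (\<lambda>_. borel) D {..<m}"
  proof -
    have W4: "\<forall>(ts :: nat \<Rightarrow> real) m. 0 \<le> ts 0 \<and> (\<forall>k<m. ts k \<le> ts (Suc k)) \<longrightarrow>
        indep_vars (\<lambda>_. borel) (\<lambda>k \<omega>. W (ts (Suc k)) \<omega> - W (ts k) \<omega>) {..<m}"
      using wien unfolding wiener_def by (elim conjE) assumption
    show ?thesis using W4[rule_format, of ts m] ts0 tsmono unfolding D_def[abs_def] by blast
  qed
  define Ev where "Ev k = {D k -` A \<inter> space M | A. A \<in> sets borel}" for k
  have Ev_eq: "Ev = (\<lambda>k. {D k -` A \<inter> space M | A. A \<in> sets borel})" by (rule ext) (simp add: Ev_def)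
  have indEv: "indep_sets Ev {..<m}" using indD unfolding Ev_eq by (simp add: indep_vars_def2)
  define I where "I j = {k. k < m \<and> a j \<le> ts k \<and> ts (Suc k) \<le> b j}" for j
  have disj: "disjoint_family_on I K"
    unfolding disjoint_family_on_def
  proof (intro ballI impI)
    fix j1 j2 assume j: "j1 \<in> K" "j2 \<in> K" "j1 \<noteq> j2"
    show "I j1 \<inter> I j2 = {}"
    proof (rule ccontr)
      assume "I j1 \<inter> I j2 \<noteq> {}"
      then obtain k where k: "k \<in> I j1" "k \<in> I j2" by auto
      have lt: "ts k < ts (Suc k)" using k mono_lt lenL by (simp add: I_def)
      show False
      proof (cases "j1 < j2")
        case True
        have "b j1 \<le> a j2" using grid_le[OF Dpos True] K j by (simp add: a_def b_def)
        then show False using k lt by (auto simp: I_def)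
      next
        case False
        then have "j2 < j1" using j by simp
        have "b j2 \<le> a j1" using grid_le[OF Dpos \<open>j2 < j1\<close>] K j by (simp add: a_def b_def)
        then show False using k lt by (auto simp: I_def)
      qed
    qed
  qed
  have stab: "\<And>k. Int_stable (Ev k)"
    unfolding Int_stable_def Ev_def
    apply auto
    apply (rule_tac x="A \<inter> Aa" in exI)
    apply auto
    done
  have sub: "(\<Union>j\<in>K. I j) \<subseteq> {..<m}" by (auto simp: I_def)
  have ind2: "indep_sets (\<lambda>j. sigma_sets (space M) (\<Union>k\<in>I j. Ev k)) K"
    by (rule indep_sets_collect_sigma[OF indep_sets_mono_index[OF sub indEv] stab disj])
  define A where "A j = {\<omega>\<in>space M. \<forall>t\<in>J j. W (c j t) \<omega> - W (a j) \<omega> \<in> E j t}" for j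
  have mem: "A j \<in> sigma_sets (space M) (\<Union>k\<in>I j. Ev k)" if j: "j \<in> K" for j
  proof -
    define N where "N = sigma (space M) (\<Union>k\<in>I j. Ev k)"
    have gen: "(\<Union>k\<in>I j. Ev k) \<subseteq> Pow (space M)" by (auto simp: Ev_def)
    have sN: "sets N = sigma_sets (space M) (\<Union>k\<in>I j. Ev k)" using gen by (simp add: N_def)
    have spN: "space N = space M" using gen by (simp add: N_def)
    have Dm: "D k \<in> borel_measurable N" if k: "k \<in> I j" for k
    proof (rule measurableI)
      fix A :: "real set" assume "A \<in> sets borel"
      then have "D k -` A \<inter> space M \<in> Ev k" by (auto simp: Ev_def)
      then have "D k -` A \<inter> space M \<in> (\<Union>k\<in>I j. Ev k)" using k by blast
      then show "D k -` A \<inter> space N \<in> sets N" unfolding sN spN by (rule sigma_sets.Basic)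
    qed simp
    have "{x\<in>space N. \<forall>t\<in>J j. W (c j t) x - W (a j) x \<in> E j t} \<in> sets N"
    proof (rule sets.sets_Collect_finite_All)
      show "finite (J j)" using J j by simp
      fix t assume t: "t \<in> J j"
      have "a j \<in> P" "c j t \<in> P" using j t by (auto simp: P_def)
      then obtain p q where p: "p < length L" "ts p = a j" and q: "q < length L" "ts q = c j t"
        using inP by blast
      have ct: "a j \<le> c j t" "c j t \<le> b j" using c j t by (auto simp: a_def b_def)
      have pq: "p \<le> q" using le_imp p q ct by simp
      have eq: "W (c j t) \<omega> - W (a j) \<omega> = (\<Sum>k\<in>{p..<q}. D k \<omega>)" for \<omega>
        using sum_Suc_diff'[OF pq, of "\<lambda>k. W (ts k) \<omega>"] p q by (simp add: D_def)
      have subI: "{p..<q} \<subseteq> I j"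
      proof
        fix k assume k: "k \<in> {p..<q}"
        have "k < m" using k q lenL by simp
        moreover have "a j \<le> ts k" using mono_le[of p k] k p q by simp
        moreover have "ts (Suc k) \<le> b j" using mono_le[of "Suc k" q] k q ct by simp
        ultimately show "k \<in> I j" by (simp add: I_def)
      qed
      have "(\<lambda>\<omega>. \<Sum>k\<in>{p..<q}. D k \<omega>) \<in> borel_measurable N"
        using Dm subI by (intro borel_measurable_sum) auto
      then have "(\<lambda>\<omega>. \<Sum>k\<in>{p..<q}. D k \<omega>) -` E j t \<inter> space N \<in> sets N"
        using E j t by (intro measurable_sets) auto
      moreover have "{x\<in>space N. W (c j t) x - W (a j) x \<in> E j t} = (\<lambda>\<omega>. \<Sum>k\<in>{p..<q}. D k \<omega>) -` E j t \<inter> space N"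
        using eq by auto
      ultimately show "{x\<in>space N. W (c j t) x - W (a j) x \<in> E j t} \<in> sets N" by simp
    qed
    then show ?thesis by (simp add: A_def sN spN)
  qed
  have "measure M (\<Inter>j\<in>K. A j) = (\<Prod>j\<in>K. measure M (A j))"
    using ind2 K mem by (intro indep_setsD) auto
  then show ?thesis by (simp add: A_def a_def)
qed

definition clip :: "real \<Rightarrow> nat \<Rightarrow> real \<Rightarrow> real" where
  "clip \<Delta> i t = max (grid \<Delta> (i - 1)) (min t (grid \<Delta> i))"

definition Zp :: "real \<Rightarrow> (real \<Rightarrow> 'a \<Rightarrow> real) \<Rightarrow> nat \<Rightarrow> 'a \<Rightarrow> real \<Rightarrow> real" where
  "Zp \<Delta> W i \<omega> = (\<lambda>t. W (clip \<Delta> i t) \<omega> - W (grid \<Delta> (i - 1)) \<omega>)"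

lemma grid_nonneg: "\<Delta> > 0 \<Longrightarrow> 0 \<le> grid \<Delta> i"
  by (simp add: grid_def)

lemma grid_mono: "\<Delta> > 0 \<Longrightarrow> p \<le> q \<Longrightarrow> grid \<Delta> p \<le> grid \<Delta> q"
  by (simp add: grid_def)

lemma clip_bounds:
  assumes "\<Delta> > 0"
  shows "grid \<Delta> (i - 1) \<le> clip \<Delta> i t" "clip \<Delta> i t \<le> grid \<Delta> i"
proof -
  have "grid \<Delta> (i - 1) \<le> grid \<Delta> i" using grid_mono[OF assms, of "i - 1" i] by simp
  then show "grid \<Delta> (i - 1) \<le> clip \<Delta> i t" "clip \<Delta> i t \<le> grid \<Delta> i"
    by (auto simp: clip_def)
qed

lemma Zp_meas:
  assumes "wiener M W" "\<Delta> > 0"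
  shows "Zp \<Delta> W i \<in> M \<rightarrow>\<^sub>M path_space"
  unfolding Zp_def
proof (rule measurable_PiM_single')
  fix t :: real
  have "0 \<le> clip \<Delta> i t" using clip_bounds(1)[OF assms(2)] grid_nonneg[OF assms(2)] by (metis order.trans)
  then show "(\<lambda>\<omega>. W (clip \<Delta> i t) \<omega> - W (grid \<Delta> (i - 1)) \<omega>) \<in> borel_measurable M"
    using W_meas[OF assms(1)] grid_nonneg[OF assms(2)] by (intro borel_measurable_diff) auto
qed simp

lemma prod_emb_UNIV_borel:
  "x \<in> prod_emb UNIV (\<lambda>_::real. (borel :: real measure)) J (Pi\<^sub>E J E) \<longleftrightarrow> (\<forall>t\<in>J. x t \<in> E t)"
  by (simp add: prod_emb_iff restrict_PiE_iff Pi_iff)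

lemma Zp_indep:
  assumes wien: "wiener M W" and Dpos: "\<Delta> > 0"
  shows "prob_space.indep_vars M (\<lambda>_. path_space) (Zp \<Delta> W) {1..n}"
proof -
  interpret prob_space M using wien by (simp add: wiener_def)
  have sp: "space path_space = UNIV" by (simp add: space_PiM)
  have ZZ: "Zp \<Delta> W i \<in> space M \<rightarrow> UNIV" for i by simp
  define F where "F i = {Zp \<Delta> W i -` g \<inter> space M | g. g \<in> prod_algebra UNIV (\<lambda>_::real. (borel :: real measure))}" for i
  have eqF: "{Zp \<Delta> W i -` A \<inter> space M | A. A \<in> sets path_space} = sigma_sets (space M) (F i)" for i
    unfolding F_def sets_PiM sp[unfolded space_PiM]
    by (rule sigma_sets_vimage_commute) simp
  have stab: "Int_stable (F i)" for i
    unfolding Int_stable_def F_def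
  proof (safe)
    fix g1 g2 assume "g1 \<in> prod_algebra UNIV (\<lambda>_::real. (borel :: real measure))" "g2 \<in> prod_algebra UNIV (\<lambda>_::real. (borel :: real measure))"
    then have "g1 \<inter> g2 \<in> prod_algebra UNIV (\<lambda>_::real. (borel :: real measure))"
      using Int_stable_prod_algebra unfolding Int_stable_def by blast
    then show "\<exists>g. Zp \<Delta> W i -` g1 \<inter> space M \<inter> (Zp \<Delta> W i -` g2 \<inter> space M) = Zp \<Delta> W i -` g \<inter> space M
        \<and> g \<in> prod_algebra UNIV (\<lambda>_::real. (borel :: real measure))"
      by (intro exI[of _ "g1 \<inter> g2"]) auto
  qed
  have indF: "indep_sets F {1..n}"
  proof (rule indep_setsI)
    fix i assume "i \<in> {1..n}"
    show "F i \<subseteq> events"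
    proof
      fix A assume "A \<in> F i"
      then obtain g where g: "g \<in> prod_algebra UNIV (\<lambda>_::real. (borel :: real measure))" "A = Zp \<Delta> W i -` g \<inter> space M"
        by (auto simp: F_def)
      have "g \<in> sets path_space" using g(1) unfolding sets_PiM by (rule sigma_sets.Basic)
      then show "A \<in> events" using g(2) Zp_meas[OF wien Dpos] by (simp add: measurable_sets)
    qed
  next
    fix A K assume K: "K \<noteq> {}" "K \<subseteq> {1..n}" "finite K" and AF: "\<forall>j\<in>K. A j \<in> F j"
    have "\<forall>j\<in>K. \<exists>J E. finite J \<and> (\<forall>t\<in>J. E t \<in> sets borel) \<and>
          A j = {\<omega>\<in>space M. \<forall>t\<in>J. W (clip \<Delta> j t) \<omega> - W (grid \<Delta> (j-1)) \<omega> \<in> E t}"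
    proof
      fix j assume "j \<in> K"
      then obtain g where g: "g \<in> prod_algebra UNIV (\<lambda>_::real. (borel :: real measure))" "A j = Zp \<Delta> W j -` g \<inter> space M"
        using AF by (auto simp: F_def)
      from g(1) show "\<exists>J E. finite J \<and> (\<forall>t\<in>J. E t \<in> sets borel) \<and>
          A j = {\<omega>\<in>space M. \<forall>t\<in>J. W (clip \<Delta> j t) \<omega> - W (grid \<Delta> (j-1)) \<omega> \<in> E t}"
      proof (rule prod_algebraE)
        fix J E assume gJ: "g = prod_emb UNIV (\<lambda>_. borel) J (Pi\<^sub>E J E)" "finite J"
          "\<And>t. t \<in> J \<Longrightarrow> E t \<in> sets borel"
        have "A j = {\<omega>\<in>space M. \<forall>t\<in>J. W (clip \<Delta> j t) \<omega> - W (grid \<Delta> (j-1)) \<omega> \<in> E t}"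
          using g(2) gJ(1) by (auto simp: prod_emb_UNIV_borel Zp_def)
        then show ?thesis using gJ by blast
      qed
    qed
    from bchoice[OF this] obtain J where "\<forall>j\<in>K. \<exists>E. finite (J j) \<and> (\<forall>t\<in>J j. E t \<in> sets borel) \<and>
          A j = {\<omega>\<in>space M. \<forall>t\<in>J j. W (clip \<Delta> j t) \<omega> - W (grid \<Delta> (j-1)) \<omega> \<in> E t}"
      ..
    from bchoice[OF this] obtain E where JE: "\<forall>j\<in>K. finite (J j) \<and> (\<forall>t\<in>J j. E j t \<in> sets borel) \<and>
          A j = {\<omega>\<in>space M. \<forall>t\<in>J j. W (clip \<Delta> j t) \<omega> - W (grid \<Delta> (j-1)) \<omega> \<in> E j t}"
      ..
    have "measure M (\<Inter>j\<in>K. {\<omega>\<in>space M. \<forall>t\<in>J j. W (clip \<Delta> j t) \<omega> - W (grid \<Delta> (j-1)) \<omega> \<in> E j t})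
       = (\<Prod>j\<in>K. measure M {\<omega>\<in>space M. \<forall>t\<in>J j. W (clip \<Delta> j t) \<omega> - W (grid \<Delta> (j-1)) \<omega> \<in> E j t})"
      using K JE clip_bounds[OF Dpos]
      by (intro block_indep[OF wien Dpos]) auto
    moreover have AS: "A j = {\<omega>\<in>space M. \<forall>t\<in>J j. W (clip \<Delta> j t) \<omega> - W (grid \<Delta> (j-1)) \<omega> \<in> E j t}"
      if "j \<in> K" for j using JE that by blast
    moreover have "\<Inter> (A ` K) = (\<Inter>j\<in>K. {\<omega>\<in>space M. \<forall>t\<in>J j. W (clip \<Delta> j t) \<omega> - W (grid \<Delta> (j-1)) \<omega> \<in> E j t})"
      using AS by (intro arg_cong[where f=Inter] image_cong) auto
    moreover have "(\<Prod>j\<in>K. prob (A j)) = (\<Prod>j\<in>K. prob {\<omega>\<in>space M. \<forall>t\<in>J j. W (clip \<Delta> j t) \<omega> - W (grid \<Delta> (j-1)) \<omega> \<in> E j t})"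
      using AS by (intro prod.cong) auto
    ultimately show "prob (\<Inter> (A ` K)) = (\<Prod>j\<in>K. prob (A j))" by simp
  qed
  have "indep_sets (\<lambda>i. sigma_sets (space M) (F i)) {1..n}"
    by (rule indep_sets_sigma[OF indF stab])
  then show ?thesis
    unfolding indep_vars_def2 using Zp_meas[OF wien Dpos] by (simp add: eqF)
qed



lemma distr_moments:
  assumes P: "prob_space M" and Xm: "X \<in> borel_measurable M" and dm: "d \<in> borel_measurable M"
    and eq: "distr M borel X = distr M borel (\<lambda>\<omega>. c * d \<omega>)"
    and i1: "integrable M d" and i2: "integrable M (\<lambda>\<omega>. (d \<omega>)\<^sup>2)"
  shows "integrable M X" "integrable M (\<lambda>\<omega>. (X \<omega>)\<^sup>2)" "expect M X = c * expect M d"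
    "var M X = c\<^sup>2 * var M d"
proof -
  interpret prob_space M by fact
  have cd: "(\<lambda>\<omega>. c * d \<omega>) \<in> borel_measurable M" using dm by simp
  have int_eq: "integrable M (\<lambda>\<omega>. g (X \<omega>)) \<longleftrightarrow> integrable M (\<lambda>\<omega>. g (c * d \<omega>))"
    if g: "g \<in> borel_measurable borel" for g :: "real \<Rightarrow> real"
    using integrable_distr_eq[OF Xm g] integrable_distr_eq[OF cd g] eq by simp
  have integ_eq: "(\<integral>\<omega>. g (X \<omega>) \<partial>M) = (\<integral>\<omega>. g (c * d \<omega>) \<partial>M)"
    if g: "g \<in> borel_measurable borel" for g :: "real \<Rightarrow> real"
    using integral_distr[OF Xm g] integral_distr[OF cd g] eq by simp
  have sq: "(\<lambda>\<omega>. (c * d \<omega>)\<^sup>2) = (\<lambda>\<omega>. c\<^sup>2 * (d \<omega>)\<^sup>2)" by (simp add: power_mult_distrib)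
  show iX: "integrable M X" using int_eq[of "\<lambda>x. x"] i1 by simp
  show iX2: "integrable M (\<lambda>\<omega>. (X \<omega>)\<^sup>2)" using int_eq[of "\<lambda>x. x\<^sup>2"] i2 sq by simp
  show eX: "expect M X = c * expect M d" using integ_eq[of "\<lambda>x. x"] by (simp add: expect_def)
  have eX2: "(\<integral>\<omega>. (X \<omega>)\<^sup>2 \<partial>M) = c\<^sup>2 * (\<integral>\<omega>. (d \<omega>)\<^sup>2 \<partial>M)"
    using integ_eq[of "\<lambda>x. x\<^sup>2"] sq by simp
  have "var M X = (\<integral>\<omega>. (X \<omega>)\<^sup>2 \<partial>M) - (expect M X)\<^sup>2"
    unfolding var_def expect_def by (rule variance_eq[OF iX iX2])
  also have "\<dots> = c\<^sup>2 * ((\<integral>\<omega>. (d \<omega>)\<^sup>2 \<partial>M) - (expect M d)\<^sup>2)"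
    using eX eX2 by (simp add: power_mult_distrib algebra_simps)
  also have "(\<integral>\<omega>. (d \<omega>)\<^sup>2 \<partial>M) - (expect M d)\<^sup>2 = var M d"
    unfolding var_def expect_def by (rule variance_eq[OF i1 i2, symmetric])
  finally show "var M X = c\<^sup>2 * var M d" .
qed

lemma var_indep_sum:
  fixes X :: "nat \<Rightarrow> 'a \<Rightarrow> real"
  assumes P: "prob_space M" and fin: "finite I" and ind: "prob_space.indep_vars M (\<lambda>_. borel) X I"
    and int1: "\<And>i. i\<in>I \<Longrightarrow> integrable M (X i)"
    and int2: "\<And>i. i\<in>I \<Longrightarrow> integrable M (\<lambda>\<omega>. (X i \<omega>)\<^sup>2)"
  shows "expect M (\<lambda>\<omega>. \<Sum>i\<in>I. X i \<omega>) = (\<Sum>i\<in>I. expect M (X i))"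
    and "var M (\<lambda>\<omega>. \<Sum>i\<in>I. X i \<omega>) = (\<Sum>i\<in>I. var M (X i))"
proof -
  interpret prob_space M by fact
  show e: "expect M (\<lambda>\<omega>. \<Sum>i\<in>I. X i \<omega>) = (\<Sum>i\<in>I. expect M (X i))"
    unfolding expect_def by (rule Bochner_Integration.integral_sum) (rule int1)
  define m where "m i = expect M (X i)" for i
  define Y where "Y i \<omega> = X i \<omega> - m i" for i \<omega>
  have intY: "integrable M (Y i)" if "i \<in> I" for i
    unfolding Y_def[abs_def] using int1[OF that] by simp
  have EY0: "(\<integral>\<omega>. Y i \<omega> \<partial>M) = 0" if "i \<in> I" for i
    unfolding Y_def using int1[OF that] by (simp add: m_def expect_def prob_space)
  have intYY: "integrable M (\<lambda>\<omega>. Y i \<omega> * Y i \<omega>)" if "i \<in> I" for i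
  proof -
    have "(\<lambda>\<omega>. Y i \<omega> * Y i \<omega>) = (\<lambda>\<omega>. (X i \<omega>)\<^sup>2 - 2 * m i * X i \<omega> + (m i)\<^sup>2)"
      by (simp add: Y_def power2_eq_square algebra_simps)
    then show ?thesis using int1[OF that] int2[OF that] by simp
  qed
  have indY: "indep_vars (\<lambda>_. borel) Y I"
  proof -
    have "indep_vars (\<lambda>_. borel) (\<lambda>i x. (\<lambda>y. y - m i) (X i x)) I"
      by (rule indep_vars_compose2[OF ind]) simp
    moreover have "(\<lambda>i x. (\<lambda>y. y - m i) (X i x)) = Y" by (simp add: Y_def[abs_def])
    ultimately show ?thesis by simp
  qed
  have cross: "integrable M (\<lambda>\<omega>. Y i \<omega> * Y j \<omega>) \<and> (\<integral>\<omega>. Y i \<omega> * Y j \<omega> \<partial>M) = 0"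
    if ij: "i \<in> I" "j \<in> I" "i \<noteq> j" for i j
  proof -
    have "indep_vars (\<lambda>_. borel) Y (insert i {j})"
      using ij by (intro indep_vars_subset[OF indY]) auto
    then have "indep_var borel (Y i) borel (\<lambda>\<omega>. \<Sum>k\<in>{j}. Y k \<omega>)"
      using ij by (intro indep_vars_sum) auto
    then have iv: "indep_var borel (Y i) borel (Y j)" by simp
    show ?thesis
      using indep_var_integrable[OF iv intY intY] indep_var_lebesgue_integral[OF iv intY intY] ij EY0
      by simp
  qed
  have intprod: "integrable M (\<lambda>\<omega>. Y i \<omega> * Y j \<omega>)" if "i \<in> I" "j \<in> I" for i j
    using cross intYY that by (cases "i = j") auto
  have sqexp: "((\<Sum>i\<in>I. X i \<omega>) - expect M (\<lambda>\<omega>. \<Sum>i\<in>I. X i \<omega>))\<^sup>2 = (\<Sum>i\<in>I. \<Sum>j\<in>I. Y i \<omega> * Y j \<omega>)" for \<omega>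
  proof -
    have "(\<Sum>i\<in>I. X i \<omega>) - (\<Sum>i\<in>I. m i) = (\<Sum>i\<in>I. Y i \<omega>)" by (simp add: Y_def sum_subtractf)
    then show ?thesis unfolding e m_def[symmetric] by (simp add: power2_eq_square sum_product)
  qed
  have "var M (\<lambda>\<omega>. \<Sum>i\<in>I. X i \<omega>) = (\<integral>\<omega>. (\<Sum>i\<in>I. \<Sum>j\<in>I. Y i \<omega> * Y j \<omega>) \<partial>M)"
    unfolding var_def sqexp ..
  also have "\<dots> = (\<Sum>i\<in>I. \<Sum>j\<in>I. (\<integral>\<omega>. Y i \<omega> * Y j \<omega> \<partial>M))"
    using intprod by (simp add: Bochner_Integration.integral_sum integrable_sum)
  also have "\<dots> = (\<Sum>i\<in>I. (\<integral>\<omega>. Y i \<omega> * Y i \<omega> \<partial>M))"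
  proof (rule sum.cong[OF refl])
    fix i assume i: "i \<in> I"
    have "(\<Sum>j\<in>I. (\<integral>\<omega>. Y i \<omega> * Y j \<omega> \<partial>M)) = (\<Sum>j\<in>I. if i = j then (\<integral>\<omega>. Y i \<omega> * Y i \<omega> \<partial>M) else 0)"
      using cross i by (intro sum.cong) auto
    also have "\<dots> = (\<integral>\<omega>. Y i \<omega> * Y i \<omega> \<partial>M)" using fin i by simp
    finally show "(\<Sum>j\<in>I. (\<integral>\<omega>. Y i \<omega> * Y j \<omega> \<partial>M)) = (\<integral>\<omega>. Y i \<omega> * Y i \<omega> \<partial>M)" .
  qed
  also have "\<dots> = (\<Sum>i\<in>I. var M (X i))"
    by (simp add: var_def Y_def m_def power2_eq_square)
  finally show "var M (\<lambda>\<omega>. \<Sum>i\<in>I. X i \<omega>) = (\<Sum>i\<in>I. var M (X i))" .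
qed

lemma sqrt_div_pos: "(s::real) > 0 \<Longrightarrow> sqrt x / s = sqrt (x / s\<^sup>2)"
  by (simp add: real_sqrt_divide)

lemma ratio_bound:
  fixes c :: "nat \<Rightarrow> real"
  assumes pos: "\<forall>i\<in>{1..n}. c i > 0" and n: "n \<ge> 1" and V: "V \<ge> 0"
  shows "sqrt (V / real n) \<le> sqrt ((\<Sum>i\<in>{1..n}. (c i)\<^sup>2) * V) / (\<Sum>i\<in>{1..n}. c i)"
proof -
  define s1 where "s1 = (\<Sum>i\<in>{1..n}. c i)"
  define s2 where "s2 = (\<Sum>i\<in>{1..n}. (c i)\<^sup>2)"
  have s1: "s1 > 0" unfolding s1_def using pos n by (intro sum_pos) auto
  have cs: "s1\<^sup>2 \<le> real n * s2"
    using Cauchy_Schwarz_ineq_sum[of "\<lambda>_. 1" c "{1..n}"] by (simp add: s1_def s2_def)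
  have "V * s1\<^sup>2 \<le> V * (real n * s2)" by (rule mult_left_mono[OF cs V])
  then have "V / real n \<le> s2 * V / s1\<^sup>2" using s1 n by (simp add: field_simps)
  then have "sqrt (V / real n) \<le> sqrt (s2 * V / s1\<^sup>2)" by (rule real_sqrt_le_mono)
  also have "\<dots> = sqrt (s2 * V) / s1" using sqrt_div_pos[OF s1] by simp
  finally show ?thesis by (simp add: s1_def s2_def)
qed

lemma ratio_const:
  fixes \<Delta> V :: real
  assumes "\<Delta> > 0" "n \<ge> 1"
  shows "sqrt ((\<Sum>i\<in>{1..n}. \<Delta>\<^sup>2) * V) / (\<Sum>i\<in>{1..n}. \<Delta>) = sqrt (V / real n)"
proof -
  have pos: "real n * \<Delta> > 0" using assms by simp
  have "sqrt ((\<Sum>i\<in>{1..n}. \<Delta>\<^sup>2) * V) / (\<Sum>i\<in>{1..n}. \<Delta>) = sqrt (real n * \<Delta>\<^sup>2 * V) / (real n * \<Delta>)"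
    by simp
  also have "\<dots> = sqrt (real n * \<Delta>\<^sup>2 * V / (real n * \<Delta>)\<^sup>2)" using sqrt_div_pos[OF pos] by simp
  also have "real n * \<Delta>\<^sup>2 * V / (real n * \<Delta>)\<^sup>2 = V / real n" using assms by (simp add: field_simps power2_eq_square)
  finally show ?thesis .
qed



lemma Xproc_diff:
  assumes Dpos: "\<Delta> > 0" and i: "1 \<le> i" "i \<le> n"
    and t: "grid \<Delta> (i-1) \<le> t" "t \<le> grid \<Delta> i"
  shows "Xproc n \<Delta> X0 \<mu> \<sigma> W t \<omega> - Xproc n \<Delta> X0 \<mu> \<sigma> W (grid \<Delta> (i-1)) \<omega>
       = \<mu> i * (t - grid \<Delta> (i-1)) + \<sigma> i * (W t \<omega> - W (grid \<Delta> (i-1)) \<omega>)"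
proof -
  define a where "a = grid \<Delta> (i-1)"
  define f where "f x j = \<mu> j * (max (grid \<Delta> (j - 1)) (min x (grid \<Delta> j)) - grid \<Delta> (j - 1))
           + \<sigma> j * (W (max (grid \<Delta> (j - 1)) (min x (grid \<Delta> j))) \<omega> - W (grid \<Delta> (j - 1)) \<omega>)" for x j
  have X: "Xproc n \<Delta> X0 \<mu> \<sigma> W x \<omega> = X0 + (\<Sum>j\<in>{1..n}. f x j)" for x
    by (simp add: Xproc_def f_def)
  have at: "a \<le> t" "t \<le> grid \<Delta> i" using t by (auto simp: a_def)
  have gm: "grid \<Delta> (j-1) \<le> grid \<Delta> j" for j using grid_mono[OF Dpos, of "j-1" j] by simp
  have other: "f t j = f a j" if j: "j \<in> {1..n}" "j \<noteq> i" for j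
  proof -
    have "max (grid \<Delta> (j-1)) (min t (grid \<Delta> j)) = max (grid \<Delta> (j-1)) (min a (grid \<Delta> j))"
    proof (cases "j < i")
      case True
      have "grid \<Delta> j \<le> a" unfolding a_def using True by (intro grid_mono[OF Dpos]) simp
      then show ?thesis using at gm[of j] by (simp add: max_def min_def)
    next
      case False
      then have "i \<le> j - 1" using j by simp
      then have "grid \<Delta> i \<le> grid \<Delta> (j-1)" by (rule grid_mono[OF Dpos])
      then show ?thesis using at gm[of j] by (simp add: max_def min_def)
    qed
    then show ?thesis by (simp add: f_def)
  qed
  have fi: "f t i = \<mu> i * (t - a) + \<sigma> i * (W t \<omega> - W a \<omega>)"
    using at by (simp add: f_def a_def max_def min_def)
  have fa: "f a i = 0"
    using at by (simp add: f_def a_def max_def min_def)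
  have iin: "i \<in> {1..n}" using i by simp
  have "(\<Sum>j\<in>{1..n}. f t j) - (\<Sum>j\<in>{1..n}. f a j) = (\<Sum>j\<in>{1..n}. f t j - f a j)"
    by (simp add: sum_subtractf)
  also have "\<dots> = (\<Sum>j\<in>{1..n}. if j = i then f t i - f a i else 0)"
    using other by (intro sum.cong) auto
  also have "\<dots> = f t i - f a i" using iin by simp
  finally show ?thesis using fi fa by (simp add: X a_def)
qed

lemma grid_step: "1 \<le> i \<Longrightarrow> grid \<Delta> i - grid \<Delta> (i - 1) = \<Delta>"
  by (simp add: grid_def of_nat_diff algebra_simps)

lemma bridge_eq:
  assumes Dpos: "\<Delta> > 0" and i: "1 \<le> i" "i \<le> n"
    and t: "grid \<Delta> (i-1) \<le> t" "t \<le> grid \<Delta> i"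
  shows "bridge n \<Delta> X0 \<mu> \<sigma> W i t \<omega> = \<sigma> i * ((W t \<omega> - W (grid \<Delta> (i-1)) \<omega>)
      - (t - grid \<Delta> (i-1)) / \<Delta> * (W (grid \<Delta> i) \<omega> - W (grid \<Delta> (i-1)) \<omega>))"
proof -
  have gm: "grid \<Delta> (i-1) \<le> grid \<Delta> i" using grid_mono[OF Dpos, of "i-1" i] by simp
  note d1 = Xproc_diff[OF Dpos i t, of X0 \<mu> \<sigma> W \<omega>]
  note d2 = Xproc_diff[OF Dpos i gm order.refl, of X0 \<mu> \<sigma> W \<omega>]
  have st: "grid \<Delta> i - grid \<Delta> (i - 1) = \<Delta>" using grid_step[OF i(1)] .
  show ?thesis
    unfolding bridge_def d1 d2 st using Dpos by (simp add: field_simps)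
qed

definition Fp :: "(nat \<Rightarrow> real) \<Rightarrow> real \<Rightarrow> nat \<Rightarrow> (real \<Rightarrow> real) \<Rightarrow> real \<Rightarrow> real" where
  "Fp \<sigma> \<Delta> i z = (\<lambda>t. if t \<in> Sint \<Delta> i then \<sigma> i * (z t - (t - grid \<Delta> (i-1)) / \<Delta> * z (grid \<Delta> i)) else 0)"

lemma bridge_path_eq:
  assumes Dpos: "\<Delta> > 0" and i: "1 \<le> i" "i \<le> n"
  shows "bridge_path n \<Delta> X0 \<mu> \<sigma> W i \<omega> = Fp \<sigma> \<Delta> i (Zp \<Delta> W i \<omega>)"
proof
  fix t
  show "bridge_path n \<Delta> X0 \<mu> \<sigma> W i \<omega> t = Fp \<sigma> \<Delta> i (Zp \<Delta> W i \<omega>) t"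
  proof (cases "t \<in> Sint \<Delta> i")
    case True
    then have t: "grid \<Delta> (i-1) \<le> t" "t \<le> grid \<Delta> i" by (auto simp: Sint_def)
    have gm: "grid \<Delta> (i-1) \<le> grid \<Delta> i" using grid_mono[OF Dpos, of "i-1" i] by simp
    have c1: "clip \<Delta> i t = t" using t by (simp add: clip_def)
    have c2: "clip \<Delta> i (grid \<Delta> i) = grid \<Delta> i" using gm by (simp add: clip_def)
    show ?thesis using True bridge_eq[OF Dpos i t]
      by (simp add: bridge_path_def Fp_def Zp_def c1 c2)
  next
    case False
    then show ?thesis by (simp add: bridge_path_def Fp_def)
  qed
qed

lemma Fp_meas: "Fp \<sigma> \<Delta> i \<in> path_space \<rightarrow>\<^sub>M path_space"
  unfolding Fp_def
proof (rule measurable_PiM_single')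
  fix t :: real
  have c: "(\<lambda>z::real\<Rightarrow>real. z s) \<in> borel_measurable path_space" for s
    by (rule measurable_component_singleton) simp
  show "(\<lambda>z. if t \<in> Sint \<Delta> i then \<sigma> i * (z t - (t - grid \<Delta> (i - 1)) / \<Delta> * z (grid \<Delta> i)) else 0)
      \<in> borel_measurable path_space"
    by (cases "t \<in> Sint \<Delta> i") (simp_all add: c)
qed simp



theorem theorem2:
  fixes M :: "'a measure" and W :: "real \<Rightarrow> 'a \<Rightarrow> real"
    and T X0 :: real and n :: nat and \<mu> :: "nat \<Rightarrow> real"
    and Dest :: "real \<Rightarrow> real \<Rightarrow> (real \<Rightarrow> real) \<Rightarrow> real"
  assumes "wiener M W"
    and "T > 0" and "n \<ge> 1"
    and meas: "\<And>a b. Dest a b \<in> borel_measurable path_space"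
    and homog: "\<And>\<sigma> i. (\<forall>j\<in>{1..n}. \<sigma> j > 0) \<Longrightarrow> i \<in> {1..n} \<Longrightarrow>
        distr M borel (spot_est Dest n (T / real n) X0 \<mu> \<sigma> W i)
          = distr M borel (\<lambda>\<omega>. (\<sigma> i)\<^sup>2 * (T / real n) * canon_est Dest W \<omega>)"
    and unbiased: "expect M (canon_est Dest W) = 1"
    and finvar: "integrable M (\<lambda>\<omega>. (canon_est Dest W \<omega>)\<^sup>2)"
  shows "(INF \<sigma>\<in>{\<sigma> :: nat \<Rightarrow> real. \<forall>j\<in>{1..n}. \<sigma> j > 0}.
            coef_var M (total_est Dest n (T / real n) X0 \<mu> \<sigma> W))
         = sqrt (var M (canon_est Dest W) / real n)"
proof -
  note wien = assms(1)
  interpret prob_space M using wien by (simp add: wiener_def)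
  define \<Delta> where "\<Delta> = T / real n"
  have Dpos: "\<Delta> > 0" using assms(2,3) by (simp add: \<Delta>_def)
  define d where "d = canon_est Dest W"
  have cbp: "canon_bridge_path W \<in> M \<rightarrow>\<^sub>M path_space"
    unfolding canon_bridge_path_def
  proof (rule measurable_PiM_single')
    fix t :: real
    show "(\<lambda>\<omega>. if t \<in> {0<..1} then W t \<omega> - t * W 1 \<omega> else 0) \<in> borel_measurable M"
    proof (cases "t \<in> {0<..1}")
      case True
      then show ?thesis using W_meas[OF wien, of t] W_meas[OF wien, of 1] by simp
    next
      case False
      then have "(\<lambda>\<omega>. if t \<in> {0<..1} then W t \<omega> - t * W 1 \<omega> else 0) = (\<lambda>_. 0)" by auto
      then show ?thesis by simp
    qed
  qed simp
  have dm: "d \<in> borel_measurable M"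
    unfolding d_def canon_est_def by (rule measurable_compose[OF cbp meas])
  have i2: "integrable M (\<lambda>\<omega>. (d \<omega>)\<^sup>2)" using finvar by (simp add: d_def)
  have i1: "integrable M d" by (rule square_integrable_imp_integrable[OF dm i2])
  have Ed: "expect M d = 1" using unbiased by (simp add: d_def)
  define V where "V = var M d"
  have V0: "V \<ge> 0" unfolding V_def var_def by (rule Bochner_Integration.integral_nonneg) simp
  have key: "coef_var M (total_est Dest n \<Delta> X0 \<mu> \<sigma> W)
      = sqrt ((\<Sum>i\<in>{1..n}. ((\<sigma> i)\<^sup>2 * \<Delta>)\<^sup>2) * V) / (\<Sum>i\<in>{1..n}. (\<sigma> i)\<^sup>2 * \<Delta>)"
    if \<sigma>pos: "\<forall>j\<in>{1..n}. \<sigma> j > 0" for \<sigma>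
  proof -
    define sp where "sp i = spot_est Dest n \<Delta> X0 \<mu> \<sigma> W i" for i
    have sp_eq: "sp i = (\<lambda>\<omega>. Dest (grid \<Delta> (i-1)) (grid \<Delta> i) (Fp \<sigma> \<Delta> i (Zp \<Delta> W i \<omega>)))"
      if "i \<in> {1..n}" for i
    proof
      fix \<omega>
      have "1 \<le> i" "i \<le> n" using that by auto
      then show "sp i \<omega> = Dest (grid \<Delta> (i-1)) (grid \<Delta> i) (Fp \<sigma> \<Delta> i (Zp \<Delta> W i \<omega>))"
        by (simp add: sp_def spot_est_def bridge_path_eq[OF Dpos])
    qed
    have Ym: "(\<lambda>z. Dest (grid \<Delta> (i-1)) (grid \<Delta> i) (Fp \<sigma> \<Delta> i z)) \<in> borel_measurable path_space" for i
      by (rule measurable_compose[OF Fp_meas meas])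
    have spm: "sp i \<in> borel_measurable M" if "i \<in> {1..n}" for i
      unfolding sp_eq[OF that] by (rule measurable_compose[OF Zp_meas[OF wien Dpos] Ym])
    have ind0: "indep_vars (\<lambda>_. borel)
        (\<lambda>i \<omega>. (\<lambda>z. Dest (grid \<Delta> (i-1)) (grid \<Delta> i) (Fp \<sigma> \<Delta> i z)) (Zp \<Delta> W i \<omega>)) {1..n}"
      by (rule indep_vars_compose2[OF Zp_indep[OF wien Dpos] Ym])
    have ind: "indep_vars (\<lambda>_. borel) sp {1..n}"
      using ind0 by (subst indep_vars_cong[OF refl sp_eq refl]) simp_all
    have hom: "distr M borel (sp i) = distr M borel (\<lambda>\<omega>. ((\<sigma> i)\<^sup>2 * \<Delta>) * d \<omega>)"
      if "i \<in> {1..n}" for i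
      using homog[OF \<sigma>pos that] by (simp add: sp_def \<Delta>_def d_def)
    note mom = distr_moments[OF prob_space_axioms spm dm hom i1 i2]
    have tot: "total_est Dest n \<Delta> X0 \<mu> \<sigma> W = (\<lambda>\<omega>. \<Sum>i\<in>{1..n}. sp i \<omega>)"
      by (rule ext) (simp add: total_est_def sp_def)
    note vs = var_indep_sum[OF prob_space_axioms _ ind mom(1) mom(2)]
    have E: "expect M (total_est Dest n \<Delta> X0 \<mu> \<sigma> W) = (\<Sum>i\<in>{1..n}. (\<sigma> i)\<^sup>2 * \<Delta>)"
      unfolding tot using vs(1) mom(3) Ed by simp
    have Vt: "var M (total_est Dest n \<Delta> X0 \<mu> \<sigma> W) = (\<Sum>i\<in>{1..n}. ((\<sigma> i)\<^sup>2 * \<Delta>)\<^sup>2) * V"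
      unfolding tot using vs(2) mom(4) by (simp add: V_def sum_distrib_right)
    show ?thesis by (simp add: coef_var_def E Vt)
  qed
  define S where "S = {\<sigma> :: nat \<Rightarrow> real. \<forall>j\<in>{1..n}. \<sigma> j > 0}"
  have one: "(\<lambda>_. 1) \<in> S" by (simp add: S_def)
  have val1: "coef_var M (total_est Dest n \<Delta> X0 \<mu> (\<lambda>_. 1) W) = sqrt (V / real n)"
    using key[of "\<lambda>_. 1"] ratio_const[OF Dpos assms(3), of V] by simp
  have lb: "sqrt (V / real n) \<le> coef_var M (total_est Dest n \<Delta> X0 \<mu> \<sigma> W)" if "\<sigma> \<in> S" for \<sigma>
  proof -
    have pos: "\<forall>j\<in>{1..n}. \<sigma> j > 0" using that by (simp add: S_def)
    then have "\<forall>i\<in>{1..n}. (\<sigma> i)\<^sup>2 * \<Delta> > 0" using Dpos by (auto intro!: mult_pos_pos)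
    from ratio_bound[OF this assms(3) V0] show ?thesis using key[OF pos] by simp
  qed
  have "(INF \<sigma>\<in>S. coef_var M (total_est Dest n \<Delta> X0 \<mu> \<sigma> W)) = sqrt (V / real n)"
    using one val1 lb by (intro cInf_eq_minimum) force+
  then show ?thesis by (simp add: S_def \<Delta>_def V_def d_def)
qed

end
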